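(* Let $K$ be a simplicial complex on the vertex set $[m]$ and let $I\subseteq[m]$. Then the fixed point set $(\mathcal{Z}_K)^{T^I}$ is empty if $I\notin K$, and if $I\in K$ it is $\mathbb{Z}_2$-equivariantly homeomorphic to $\mathcal{Z}_{\operatorname{lk}_K(I)}$, where both carry the complex conjugation $\mathbb{Z}_2$-action.
   Context: The moment-angle complex is $\mathcal{Z}_K=\bigcup_{\sigma\in K}\{(z_1,\ldots,z_m)\in(D^2)^m: |z_i|=1\text{ for } i\notin\sigma\}$, where $D^2$ is the closed unit disc in $\mathbb{C}$. The torus $T^m=(S^1)^m$ acts by coordinatewise multiplication and $T^I=\{t\in T^m: t_i=1 \text{ for } i\notin I\}$ acts by restriction; $\mathbb{Z}_2$ acts by coordinatewise complex conjugation. The link of a face $\sigma$ is $\operatorname{lk}_K(\sigma)=\{\tau\in K:\tau\cap\sigma=\varnothing,\ \tau\cup\sigma\in K\}$, regarded as a simplicial complex on the vertex set $[m]\setminus\sigma$, and $\mathcal{Z}_{\operatorname{lk}_K(I)}\subseteq(D^2)^{[m]\setminus I}$ is formed with respect to that vertex set. *)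

theory Defs
  imports "HOL-Analysis.Analysis"
begin

text \<open>Points of (D^2)^V are extensional functions V \<rightarrow> complex (value undefined off V),
  topologised as a subspace of the product topology on complex^V.\<close>

definition simplicial_complex :: "nat set \<Rightarrow> nat set set \<Rightarrow> bool" where
  "simplicial_complex V K \<longleftrightarrow> (\<forall>\<sigma>\<in>K. \<sigma> \<subseteq> V) \<and> (\<forall>\<sigma>\<in>K. \<forall>\<tau>. \<tau> \<subseteq> \<sigma> \<longrightarrow> \<tau> \<in> K)"

definition link :: "nat set set \<Rightarrow> nat set \<Rightarrow> nat set set" where
  "link K \<sigma> = {\<tau> \<in> K. \<tau> \<inter> \<sigma> = {} \<and> \<tau> \<union> \<sigma> \<in> K}"

definition moment_angle :: "nat set \<Rightarrow> nat set set \<Rightarrow> (nat \<Rightarrow> complex) set" where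
  "moment_angle V K =
     (\<Union>\<sigma>\<in>K. {z \<in> Pi\<^sub>E V (\<lambda>_. cball 0 1). \<forall>i \<in> V - \<sigma>. norm (z i) = 1})"

definition ptop :: "nat set \<Rightarrow> (nat \<Rightarrow> complex) topology" where
  "ptop V = product_topology (\<lambda>_. euclidean) V"

definition subtorus :: "nat set \<Rightarrow> nat set \<Rightarrow> (nat \<Rightarrow> complex) set" where
  "subtorus V I = {t \<in> Pi\<^sub>E V (\<lambda>_. sphere 0 1). \<forall>i \<in> V - I. t i = 1}"

definition torus_act :: "nat set \<Rightarrow> (nat \<Rightarrow> complex) \<Rightarrow> (nat \<Rightarrow> complex) \<Rightarrow> (nat \<Rightarrow> complex)" where
  "torus_act V t z = (\<lambda>i\<in>V. t i * z i)"

definition fixed_points :: "nat set \<Rightarrow> nat set \<Rightarrow> (nat \<Rightarrow> complex) set \<Rightarrow> (nat \<Rightarrow> complex) set" where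
  "fixed_points V I X = {z \<in> X. \<forall>t \<in> subtorus V I. torus_act V t z = z}"

definition conj_act :: "nat set \<Rightarrow> (nat \<Rightarrow> complex) \<Rightarrow> (nat \<Rightarrow> complex)" where
  "conj_act V z = (\<lambda>i\<in>V. cnj (z i))"

end

theory Submission
  imports Defs
begin

lemma fp_char:
  assumes "I \<subseteq> V"
  shows "fixed_points V I (moment_angle V K) = {z \<in> moment_angle V K. \<forall>i\<in>I. z i = 0}"
proof (intro set_eqI iffI)
  fix z assume z: "z \<in> fixed_points V I (moment_angle V K)"
  hence zM: "z \<in> moment_angle V K" and fx: "\<forall>t \<in> subtorus V I. torus_act V t z = z"
    by (auto simp: fixed_points_def)
  have "z i = 0" if i: "i \<in> I" for i
  proof -
    define t where "t = (\<lambda>j\<in>V. if j = i then -1 else (1::complex))"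
    have "t \<in> subtorus V I" using i assms by (auto simp: subtorus_def t_def)
    hence "torus_act V t z i = z i" using fx by simp
    moreover have "torus_act V t z i = - z i" using i assms by (auto simp: torus_act_def t_def)
    ultimately show ?thesis by simp
  qed
  thus "z \<in> {z \<in> moment_angle V K. \<forall>i\<in>I. z i = 0}" using zM by auto
next
  fix z assume z: "z \<in> {z \<in> moment_angle V K. \<forall>i\<in>I. z i = 0}"
  hence zM: "z \<in> moment_angle V K" and z0: "\<forall>i\<in>I. z i = 0" by auto
  from zM have zE: "z \<in> extensional V" by (auto simp: moment_angle_def PiE_def)
  have "torus_act V t z = z" if t: "t \<in> subtorus V I" for t
  proof
    fix j show "torus_act V t z j = z j"
      using t z0 zE by (cases "j \<in> V"; cases "j \<in> I") (auto simp: torus_act_def subtorus_def extensional_def)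
  qed
  thus "z \<in> fixed_points V I (moment_angle V K)" using zM by (auto simp: fixed_points_def)
qed

theorem lemma3p5:
  fixes m :: nat and K :: "nat set set" and I :: "nat set"
  assumes "simplicial_complex {1..m} K"
    and "I \<subseteq> {1..m}"
  shows "(I \<notin> K \<longrightarrow> fixed_points {1..m} I (moment_angle {1..m} K) = {})
       \<and> (I \<in> K \<longrightarrow>
          (\<exists>f. homeomorphic_map
                 (subtopology (ptop {1..m}) (fixed_points {1..m} I (moment_angle {1..m} K)))
                 (subtopology (ptop ({1..m} - I)) (moment_angle ({1..m} - I) (link K I))) f
             \<and> (\<forall>z \<in> fixed_points {1..m} I (moment_angle {1..m} K).
                   f (conj_act {1..m} z) = conj_act ({1..m} - I) (f z))))"
proof -
  define V where "V = {1..m::nat}"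
  have sc: "\<And>\<sigma> \<tau>. \<sigma> \<in> K \<Longrightarrow> \<tau> \<subseteq> \<sigma> \<Longrightarrow> \<tau> \<in> K"
    using assms(1) by (auto simp: simplicial_complex_def)
  have IV: "I \<subseteq> V" using assms(2) V_def by simp
  have FP: "fixed_points V I (moment_angle V K) = {z \<in> moment_angle V K. \<forall>i\<in>I. z i = 0}"
    by (rule fp_char[OF IV])
  have sub: "I \<subseteq> \<sigma>" if "z \<in> moment_angle V K" "\<forall>i\<in>I. z i = 0" "\<sigma> \<in> K"
     "\<forall>i \<in> V - \<sigma>. norm (z i) = 1" for z \<sigma>
  proof
    fix i assume i: "i \<in> I"
    show "i \<in> \<sigma>"
    proof (rule ccontr)
      assume "i \<notin> \<sigma>"
      hence "i \<in> V - \<sigma>" using i IV by blast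
      hence "norm (z i) = 1" using that(4) by blast
      moreover have "z i = 0" using that(2) i by blast
      ultimately show False by simp
    qed
  qed
  have part1: "I \<notin> K \<longrightarrow> fixed_points V I (moment_angle V K) = {}"
  proof (intro impI equals0I)
    fix z assume "I \<notin> K" "z \<in> fixed_points V I (moment_angle V K)"
    hence zM: "z \<in> moment_angle V K" and z0: "\<forall>i\<in>I. z i = 0" unfolding FP by auto
    from zM obtain \<sigma> where s1: "\<sigma> \<in> K" and s2: "\<forall>i \<in> V - \<sigma>. norm (z i) = 1"
      unfolding moment_angle_def by auto
    have "I \<subseteq> \<sigma>" by (rule sub[OF zM z0 s1 s2])
    hence "I \<in> K" by (rule sc[OF s1])
    with \<open>I \<notin> K\<close> show False by simp
  qed
  have part2: "\<exists>f. homeomorphic_map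
                 (subtopology (ptop V) (fixed_points V I (moment_angle V K)))
                 (subtopology (ptop (V - I)) (moment_angle (V - I) (link K I))) f
             \<and> (\<forall>z \<in> fixed_points V I (moment_angle V K).
                   f (conj_act V z) = conj_act (V - I) (f z))" if IK: "I \<in> K"
  proof -
    define f where "f = (\<lambda>z::nat\<Rightarrow>complex. restrict z (V - I))"
    define g where "g = (\<lambda>w::nat\<Rightarrow>complex. (\<lambda>i. if i \<in> I then 0 else w i))"
    define A where "A = fixed_points V I (moment_angle V K)"
    define B where "B = moment_angle (V - I) (link K I)"
    have fA: "f z \<in> B" if "z \<in> A" for z
    proof -
      from that have zM: "z \<in> moment_angle V K" and z0: "\<forall>i\<in>I. z i = 0"
        unfolding A_def FP by auto
      from zM obtain \<sigma> where "\<sigma> \<in> K" "\<forall>i \<in> V - \<sigma>. norm (z i) = 1"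
        "z \<in> Pi\<^sub>E V (\<lambda>_. cball 0 1)"
        unfolding moment_angle_def by blast
      note s = this(1,2) z0 zM this(3)
      have "I \<subseteq> \<sigma>" using sub s by blast
      have "\<sigma> - I \<in> link K I" using s sc \<open>I \<subseteq> \<sigma>\<close>
        by (auto simp: link_def Un_absorb2)
      moreover have "f z \<in> Pi\<^sub>E (V - I) (\<lambda>_. cball 0 1)" using s by (auto simp: f_def PiE_def Pi_def)
      moreover have "\<forall>i \<in> (V - I) - (\<sigma> - I). norm (f z i) = 1" using s by (auto simp: f_def)
      ultimately show ?thesis unfolding B_def moment_angle_def by blast
    qed
    have gB: "g w \<in> A" if "w \<in> B" for w
    proof -
      from that obtain \<tau> where t: "\<tau> \<in> link K I" "\<forall>i \<in> (V - I) - \<tau>. norm (w i) = 1"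
        "w \<in> Pi\<^sub>E (V - I) (\<lambda>_. cball 0 1)"
        unfolding B_def moment_angle_def by blast
      have "\<tau> \<union> I \<in> K" using t by (auto simp: link_def)
      moreover have "g w \<in> Pi\<^sub>E V (\<lambda>_. cball 0 1)" using t IV
        by (auto simp: g_def PiE_def Pi_def extensional_def)
      moreover have "\<forall>i \<in> V - (\<tau> \<union> I). norm (g w i) = 1" using t by (auto simp: g_def)
      ultimately have "g w \<in> moment_angle V K" unfolding moment_angle_def by blast
      thus ?thesis unfolding A_def FP by (auto simp: g_def)
    qed
    have gf: "g (f z) = z" if "z \<in> A" for z
    proof
      fix i
      from that have "z \<in> extensional V" "\<forall>i\<in>I. z i = 0"
        unfolding A_def FP by (auto simp: moment_angle_def PiE_def)
      thus "g (f z) i = z i" by (auto simp: g_def f_def extensional_def)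
    qed
    have fg: "f (g w) = w" if "w \<in> B" for w
    proof
      fix i
      from that have "w \<in> extensional (V - I)"
        unfolding B_def by (auto simp: moment_angle_def PiE_def)
      thus "f (g w) i = w i" by (auto simp: g_def f_def extensional_def)
    qed
    have cf: "continuous_map (subtopology (ptop V) A) (subtopology (ptop (V - I)) B) f"
    proof (rule continuous_map_into_subtopology)
      show "continuous_map (subtopology (ptop V) A) (ptop (V - I)) f"
        unfolding ptop_def
      proof (rule continuous_map_from_subtopology, subst continuous_map_componentwise, intro conjI ballI)
        show "f ` topspace (product_topology (\<lambda>_. euclidean) V) \<subseteq> extensional (V - I)"
          by (auto simp: f_def)
        fix k assume k: "k \<in> V - I"
        hence "k \<in> V" by blast
        have "continuous_map (product_topology (\<lambda>_. euclidean) V) euclidean (\<lambda>x. x k)"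
          using continuous_map_product_projection[OF \<open>k \<in> V\<close>, of "\<lambda>_. euclidean"] by simp
        thus "continuous_map (product_topology (\<lambda>_. euclidean) V) euclidean (\<lambda>x. f x k)"
          using k by (simp add: f_def)
      qed
      show "f \<in> topspace (subtopology (ptop V) A) \<rightarrow> B" using fA by auto
    qed
    have cg: "continuous_map (subtopology (ptop (V - I)) B) (subtopology (ptop V) A) g"
    proof (rule continuous_map_into_subtopology)
      show "continuous_map (subtopology (ptop (V - I)) B) (ptop V) g"
        unfolding ptop_def
      proof (rule continuous_map_from_subtopology, subst continuous_map_componentwise, intro conjI ballI)
        show "g ` topspace (product_topology (\<lambda>_. euclidean) (V - I)) \<subseteq> extensional V"
          using IV by (auto simp: g_def extensional_def)
        fix k assume k: "k \<in> V"
        show "continuous_map (product_topology (\<lambda>_. euclidean) (V - I)) euclidean (\<lambda>x. g x k)"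
        proof (cases "k \<in> I")
          case True thus ?thesis by (simp add: g_def)
        next
          case False
          hence kk: "k \<in> V - I" using k by blast
          have "continuous_map (product_topology (\<lambda>_. euclidean) (V - I)) euclidean (\<lambda>x. x k)"
            using continuous_map_product_projection[OF kk, of "\<lambda>_. euclidean"] by simp
          thus ?thesis using False by (simp add: g_def)
        qed
      qed
      show "g \<in> topspace (subtopology (ptop (V - I)) B) \<rightarrow> A" using gB by auto
    qed
    have "homeomorphic_map (subtopology (ptop V) A) (subtopology (ptop (V - I)) B) f"
      unfolding homeomorphic_map_maps homeomorphic_maps_def
      using cf cg gf fg by (intro exI[of _ g]) auto
    moreover have "f (conj_act V z) = conj_act (V - I) (f z)" for z
      by (auto simp: f_def conj_act_def)
    ultimately show ?thesis unfolding A_def B_def by blast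
  qed
  show ?thesis using part1 part2 unfolding V_def by blast
qed

end
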